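(* Let $A$ (in $\mathcal H$) and $B$ (in $\mathcal K$) be closed densely defined operators with $A\dashv B$ via a (possibly unbounded) intertwining operator $T$. Then: (i) $\sigma_p(A)\subseteq\sigma_p(B)$; if $\xi\in D(A)$ is an eigenvector of $A$ for eigenvalue $\lambda$, then $T\xi$ is an eigenvector of $B$ for $\lambda$; hence for every $\lambda\in\sigma_p(A)$ the multiplicities satisfy $m_A(\lambda)\le m_B(\lambda)$; (ii) if $TD(A)=D(B)$ and $T^{-1}$ is bounded, then $\sigma_p(A)=\sigma_p(B)$; (iii) if $T^{-1}$ is bounded and $TD(A)$ is a core for $B$, then $\sigma_p(B)\subseteq\sigma(A)$.
   Context: A closed densely defined operator $T:D(T)\subseteq\mathcal H\to\mathcal K$ is an intertwining operator for $A$ and $B$ if $D(A)\subseteq D(T)$ and $AD(A)\subseteq D(T)$, $TD(A)\subseteq D(B)$, and $BT\xi=TA\xi$ for all $\xi\in D(A)$. $A\dashv B$ means there is such an intertwining operator $T$, injective with densely defined inverse $T^{-1}$ (defined on $R(T)$). $\sigma_p$ denotes the set of eigenvalues, $m_A(\lambda)$ the dimension of $\ker(A-\lambda I)$, and $\sigma(A)$ the spectrum (complement of the set of $\lambda$ for which $A-\lambda I$ has a bounded everywhere defined inverse). *)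

theory Defs
  imports "HOL-Analysis.Analysis"
begin

class complex_vector = real_vector +
  fixes scaleC :: "complex \<Rightarrow> 'a \<Rightarrow> 'a" (infixr \<open>*\<^sub>C\<close> 75)
  assumes scaleC_add_right: "scaleC a (x + y) = scaleC a x + scaleC a y"
    and scaleC_add_left: "scaleC (a + b) x = scaleC a x + scaleC b x"
    and scaleC_scaleC: "scaleC a (scaleC b x) = scaleC (a * b) x"
    and scaleC_one: "scaleC 1 x = x"
    and scaleR_scaleC: "scaleR r x = scaleC (complex_of_real r) x"

class complex_normed_vector = complex_vector + real_normed_vector +
  assumes norm_scaleC: "norm (scaleC a x) = cmod a * norm x"

class complex_inner = complex_normed_vector +
  fixes cinner :: "'a \<Rightarrow> 'a \<Rightarrow> complex"
  assumes cinner_commute: "cinner x y = cnj (cinner y x)"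
    and cinner_add_left: "cinner (x + y) z = cinner x z + cinner y z"
    and cinner_scaleC_left: "cinner (scaleC r x) y = cnj r * cinner x y"
    and cinner_self_real: "Im (cinner x x) = 0"
    and cinner_self_nonneg: "0 \<le> Re (cinner x x)"
    and cinner_self_eq_0: "cinner x x = 0 \<longleftrightarrow> x = 0"
    and norm_eq_sqrt_cinner: "norm x = sqrt (Re (cinner x x))"

class chilbert_space = complex_inner + complete_space

section \<open>Unbounded operators, given by a domain D and a map f (values outside D irrelevant)\<close>

definition csubspace :: "'a::complex_vector set \<Rightarrow> bool" where
  "csubspace S \<longleftrightarrow> 0 \<in> S \<and> (\<forall>x\<in>S. \<forall>y\<in>S. x + y \<in> S) \<and> (\<forall>c. \<forall>x\<in>S. c *\<^sub>C x \<in> S)"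

definition linear_op :: "'a::complex_vector set \<Rightarrow> ('a \<Rightarrow> 'b::complex_vector) \<Rightarrow> bool" where
  "linear_op D f \<longleftrightarrow> csubspace D \<and>
     (\<forall>x\<in>D. \<forall>y\<in>D. f (x + y) = f x + f y) \<and> (\<forall>c. \<forall>x\<in>D. f (c *\<^sub>C x) = c *\<^sub>C f x)"

definition graph_op :: "'a set \<Rightarrow> ('a \<Rightarrow> 'b) \<Rightarrow> ('a \<times> 'b) set" where
  "graph_op D f = {(x, f x) | x. x \<in> D}"

definition closed_op :: "'a::complex_normed_vector set \<Rightarrow> ('a \<Rightarrow> 'b::complex_normed_vector) \<Rightarrow> bool" where
  "closed_op D f \<longleftrightarrow> linear_op D f \<and> closed (graph_op D f)"

definition densely_defined :: "'a::complex_normed_vector set \<Rightarrow> bool" where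
  "densely_defined D \<longleftrightarrow> closure D = UNIV"

definition intertwining ::
  "'a::complex_normed_vector set \<Rightarrow> ('a \<Rightarrow> 'a) \<Rightarrow> 'b::complex_normed_vector set \<Rightarrow> ('b \<Rightarrow> 'b)
   \<Rightarrow> 'a set \<Rightarrow> ('a \<Rightarrow> 'b) \<Rightarrow> bool" where
  "intertwining DA A DB B DT T \<longleftrightarrow>
     closed_op DT T \<and> densely_defined DT \<and>
     DA \<subseteq> DT \<and> A ` DA \<subseteq> DT \<and> T ` DA \<subseteq> DB \<and>
     (\<forall>\<xi>\<in>DA. B (T \<xi>) = T (A \<xi>))"

text \<open>A \<turnstile> B via T: T intertwining, injective, with densely defined inverse (domain R(T)).\<close>
definition quasi_affine_via ::
  "'a::complex_normed_vector set \<Rightarrow> ('a \<Rightarrow> 'a) \<Rightarrow> 'b::complex_normed_vector set \<Rightarrow> ('b \<Rightarrow> 'b)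
   \<Rightarrow> 'a set \<Rightarrow> ('a \<Rightarrow> 'b) \<Rightarrow> bool" where
  "quasi_affine_via DA A DB B DT T \<longleftrightarrow>
     intertwining DA A DB B DT T \<and> inj_on T DT \<and> densely_defined (T ` DT)"

definition bounded_inverse :: "'a::complex_normed_vector set \<Rightarrow> ('a \<Rightarrow> 'b::complex_normed_vector) \<Rightarrow> bool" where
  "bounded_inverse D T \<longleftrightarrow> inj_on T D \<and> (\<exists>C. \<forall>x\<in>D. norm x \<le> C * norm (T x))"

definition is_eigenvector :: "'a::complex_vector set \<Rightarrow> ('a \<Rightarrow> 'a) \<Rightarrow> complex \<Rightarrow> 'a \<Rightarrow> bool" where
  "is_eigenvector D A \<mu> \<xi> \<longleftrightarrow> \<xi> \<in> D \<and> \<xi> \<noteq> 0 \<and> A \<xi> = \<mu> *\<^sub>C \<xi>"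

definition point_spectrum :: "'a::complex_vector set \<Rightarrow> ('a \<Rightarrow> 'a) \<Rightarrow> complex set" where
  "point_spectrum D A = {\<mu>. \<exists>\<xi>. is_eigenvector D A \<mu> \<xi>}"

definition cindependent :: "'a::complex_vector set \<Rightarrow> bool" where
  "cindependent S \<longleftrightarrow> (\<forall>F u. finite F \<and> F \<subseteq> S \<and> (\<Sum>x\<in>F. u x *\<^sub>C x) = 0 \<longrightarrow> (\<forall>x\<in>F. u x = 0))"

definition cdim :: "'a::complex_vector set \<Rightarrow> enat" where
  "cdim S = (SUP F \<in> {F. finite F \<and> F \<subseteq> S \<and> cindependent F}. enat (card F))"

definition eigenspace :: "'a::complex_vector set \<Rightarrow> ('a \<Rightarrow> 'a) \<Rightarrow> complex \<Rightarrow> 'a set" where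
  "eigenspace D A \<mu> = {\<xi> \<in> D. A \<xi> - \<mu> *\<^sub>C \<xi> = 0}"

definition multiplicity_op :: "'a::complex_vector set \<Rightarrow> ('a \<Rightarrow> 'a) \<Rightarrow> complex \<Rightarrow> enat" where
  "multiplicity_op D A \<mu> = cdim (eigenspace D A \<mu>)"

definition bounded_clinear_map :: "('a::complex_normed_vector \<Rightarrow> 'b::complex_normed_vector) \<Rightarrow> bool" where
  "bounded_clinear_map R \<longleftrightarrow> (\<forall>x y. R (x + y) = R x + R y) \<and> (\<forall>c x. R (c *\<^sub>C x) = c *\<^sub>C R x)
     \<and> (\<exists>K. \<forall>x. norm (R x) \<le> K * norm x)"

definition resolvent_set :: "'a::complex_normed_vector set \<Rightarrow> ('a \<Rightarrow> 'a) \<Rightarrow> complex set" where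
  "resolvent_set D A = {\<mu>. \<exists>R. bounded_clinear_map R \<and> range R \<subseteq> D \<and>
      (\<forall>y. A (R y) - \<mu> *\<^sub>C R y = y) \<and> (\<forall>x\<in>D. R (A x - \<mu> *\<^sub>C x) = x)}"

definition spectrum_op :: "'a::complex_normed_vector set \<Rightarrow> ('a \<Rightarrow> 'a) \<Rightarrow> complex set" where
  "spectrum_op D A = - resolvent_set D A"

definition is_core :: "'a::complex_normed_vector set \<Rightarrow> ('a \<Rightarrow> 'a) \<Rightarrow> 'a set \<Rightarrow> bool" where
  "is_core D B C \<longleftrightarrow> C \<subseteq> D \<and> closure (graph_op C B) = graph_op D B"

end

theory Submission
  imports Defs
begin

lemma sC0: "(0::complex) *\<^sub>C (x::'a::complex_vector) = 0"
  by (metis scaleR_scaleC scale_zero_left of_real_0)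
lemma sCm1: "(-1::complex) *\<^sub>C (x::'a::complex_vector) = - x"
  by (metis scaleR_scaleC scaleR_minus1_left of_real_minus of_real_1)
lemma sC_diff: "(c::complex) *\<^sub>C ((x::'a::complex_vector) - y) = c *\<^sub>C x - c *\<^sub>C y"
  by (metis add_diff_cancel diff_add_cancel scaleC_add_right)
lemma sC_x0: "(c::complex) *\<^sub>C (0::'a::complex_vector) = 0"
  by (metis add_cancel_right_right scaleC_add_right)

lemma lin_0: assumes "linear_op D f" shows "f 0 = 0" "0 \<in> D"
proof -
  have s: "csubspace D" using assms unfolding linear_op_def by auto
  hence "0 \<in> D" unfolding csubspace_def by auto
  thus "0 \<in> D" .
  have "f (0 *\<^sub>C 0) = 0 *\<^sub>C f 0" using assms \<open>0\<in>D\<close> unfolding linear_op_def by blast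
  thus "f 0 = 0" by (simp add: sC0 sC_x0)
qed

lemma lin_diff: assumes "linear_op D f" "x \<in> D" "y \<in> D"
  shows "x - y \<in> D" "f (x - y) = f x - f y"
proof -
  have s: "csubspace D" using assms unfolding linear_op_def by auto
  have "(-1::complex) *\<^sub>C y \<in> D" using s assms unfolding csubspace_def by auto
  hence m: "-y \<in> D" by (simp add: sCm1)
  thus "x - y \<in> D" using s assms unfolding csubspace_def by (metis diff_conv_add_uminus)
  have "f ((-1::complex) *\<^sub>C y) = (-1) *\<^sub>C f y" using assms unfolding linear_op_def by blast
  hence "f (-y) = - f y" by (simp add: sCm1)
  thus "f (x - y) = f x - f y" using assms m unfolding linear_op_def by (metis diff_conv_add_uminus)
qed

lemma lin_scale: assumes "linear_op D f" "x \<in> D" shows "c *\<^sub>C x \<in> D" "f (c *\<^sub>C x) = c *\<^sub>C f x"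
  using assms unfolding linear_op_def csubspace_def by auto

lemma lin_sum: assumes "linear_op D f" "finite F" "F \<subseteq> D"
  shows "(\<Sum>x\<in>F. u x *\<^sub>C x) \<in> D \<and> f (\<Sum>x\<in>F. u x *\<^sub>C x) = (\<Sum>x\<in>F. u x *\<^sub>C f x)"
  using assms(2,3)
proof (induction F rule: finite_induct)
  case empty then show ?case using lin_0[OF assms(1)] by simp
next
  case (insert a F)
  have a: "a \<in> D" using insert by auto
  have "(u a *\<^sub>C a) \<in> D" "f (u a *\<^sub>C a) = u a *\<^sub>C f a" using lin_scale[OF assms(1) a] by auto
  then show ?case using insert assms(1) unfolding linear_op_def csubspace_def by auto
qed


lemma indep_image:
  assumes lin: "linear_op D f" and inj: "inj_on f D" and F: "finite F" "F \<subseteq> D" "cindependent F"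
  shows "cindependent (f ` F)"
  unfolding cindependent_def
proof (intro allI impI)
  fix G u assume G: "finite G \<and> G \<subseteq> f ` F \<and> (\<Sum>x\<in>G. u x *\<^sub>C x) = 0"
  define F' where "F' = {x\<in>F. f x \<in> G}"
  have fin: "finite F'" using F unfolding F'_def by auto
  have sub: "F' \<subseteq> D" using F unfolding F'_def by auto
  have injF: "inj_on f F'" using inj sub by (meson inj_on_subset)
  have GF: "G = f ` F'" using G unfolding F'_def by auto
  have "(\<Sum>x\<in>G. u x *\<^sub>C x) = (\<Sum>x\<in>F'. u (f x) *\<^sub>C f x)"
    unfolding GF using sum.reindex[OF injF] by (simp add: comp_def)
  also have "\<dots> = f (\<Sum>x\<in>F'. u (f x) *\<^sub>C x)" using lin_sum[OF lin fin sub] by simp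
  finally have "f (\<Sum>x\<in>F'. u (f x) *\<^sub>C x) = f 0" using G lin_0[OF lin] by simp
  hence "(\<Sum>x\<in>F'. u (f x) *\<^sub>C x) = 0"
    using inj lin_sum[OF lin fin sub] lin_0[OF lin] by (meson inj_onD)
  moreover have "F' \<subseteq> F" unfolding F'_def by auto
  ultimately have "\<forall>x\<in>F'. u (f x) = 0" using F(3) fin unfolding cindependent_def
    by (elim allE[where x=F'] allE[where x="\<lambda>x. u (f x)"]) blast
  thus "\<forall>x\<in>G. u x = 0" unfolding GF by auto
qed

theorem proposition3p18:
  fixes DA :: "'a::chilbert_space set" and A :: "'a \<Rightarrow> 'a"
    and DB :: "'b::chilbert_space set" and B :: "'b \<Rightarrow> 'b"
    and DT :: "'a set" and T :: "'a \<Rightarrow> 'b"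
  assumes A: "closed_op DA A" "densely_defined DA"
    and B: "closed_op DB B" "densely_defined DB"
    and T: "quasi_affine_via DA A DB B DT T"
  shows "(point_spectrum DA A \<subseteq> point_spectrum DB B
          \<and> (\<forall>\<xi> \<mu>. is_eigenvector DA A \<mu> \<xi> \<longrightarrow> is_eigenvector DB B \<mu> (T \<xi>))
          \<and> (\<forall>\<mu>\<in>point_spectrum DA A. multiplicity_op DA A \<mu> \<le> multiplicity_op DB B \<mu>))
     \<and> (T ` DA = DB \<and> bounded_inverse DT T \<longrightarrow> point_spectrum DA A = point_spectrum DB B)
     \<and> (bounded_inverse DT T \<and> is_core DB B (T ` DA) \<longrightarrow> point_spectrum DB B \<subseteq> spectrum_op DA A)"
proof -
  have linT: "linear_op DT T" and clT: "closed (graph_op DT T)" and injT: "inj_on T DT"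
    and DAT: "DA \<subseteq> DT" and ADT: "A ` DA \<subseteq> DT" and TDB: "T ` DA \<subseteq> DB"
    and inter: "\<And>\<xi>. \<xi> \<in> DA \<Longrightarrow> B (T \<xi>) = T (A \<xi>)"
    using T unfolding quasi_affine_via_def intertwining_def closed_op_def by auto
  have linA: "linear_op DA A" using A unfolding closed_op_def by auto
  have T0: "T 0 = 0" and DT0: "0 \<in> DT" using lin_0[OF linT] by auto
  have eig: "B (T \<xi>) - \<mu> *\<^sub>C T \<xi> = T (A \<xi> - \<mu> *\<^sub>C \<xi>) \<and> A \<xi> - \<mu> *\<^sub>C \<xi> \<in> DT"
    if "\<xi> \<in> DA" for \<xi> \<mu>
  proof -
    have x: "\<xi> \<in> DT" "A \<xi> \<in> DT" using that DAT ADT by auto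
    have "\<mu> *\<^sub>C \<xi> \<in> DT" "T (\<mu> *\<^sub>C \<xi>) = \<mu> *\<^sub>C T \<xi>" using lin_scale[OF linT x(1)] by auto
    thus ?thesis using lin_diff[OF linT x(2)] inter[OF that] by auto
  qed
  have Tne0: "T \<xi> \<noteq> 0" if "\<xi> \<in> DT" "\<xi> \<noteq> 0" for \<xi>
    using injT that T0 DT0 by (metis inj_onD)
  have Tinj0: "\<xi> = 0" if "\<xi> \<in> DT" "T \<xi> = 0" for \<xi>
    using Tne0 that by blast
  have ev: "is_eigenvector DB B \<mu> (T \<xi>)" if "is_eigenvector DA A \<mu> \<xi>" for \<xi> \<mu>
  proof -
    have x: "\<xi> \<in> DA" "\<xi> \<noteq> 0" "A \<xi> = \<mu> *\<^sub>C \<xi>" using that unfolding is_eigenvector_def by auto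
    have "B (T \<xi>) - \<mu> *\<^sub>C T \<xi> = 0" using eig[OF x(1), of \<mu>] x T0 by simp
    thus ?thesis using x TDB DAT Tne0 unfolding is_eigenvector_def by auto
  qed
  have P1: "point_spectrum DA A \<subseteq> point_spectrum DB B"
    using ev unfolding point_spectrum_def by blast
  have P3: "multiplicity_op DA A \<mu> \<le> multiplicity_op DB B \<mu>" for \<mu>
    unfolding multiplicity_op_def cdim_def
  proof (rule SUP_least)
    fix F assume F: "F \<in> {F. finite F \<and> F \<subseteq> eigenspace DA A \<mu> \<and> cindependent F}"
    have FD: "F \<subseteq> DT" using F DAT unfolding eigenspace_def by auto
    have "T ` F \<subseteq> eigenspace DB B \<mu>"
    proof
      fix y assume "y \<in> T ` F"
      then obtain \<xi> where \<xi>: "\<xi> \<in> F" "y = T \<xi>" by auto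
      hence "\<xi> \<in> DA" "A \<xi> - \<mu> *\<^sub>C \<xi> = 0" using F unfolding eigenspace_def by auto
      thus "y \<in> eigenspace DB B \<mu>" using eig[of \<xi> \<mu>] \<xi> T0 TDB unfolding eigenspace_def by auto
    qed
    moreover have "cindependent (T ` F)" using indep_image[OF linT injT _ FD] F by auto
    moreover have "card (T ` F) = card F" using card_image inj_on_subset[OF injT FD] by blast
    ultimately show "enat (card F) \<le> (SUP F \<in> {F. finite F \<and> F \<subseteq> eigenspace DB B \<mu> \<and> cindependent F}. enat (card F))"
      using F by (intro SUP_upper2[of "T ` F"]) auto
  qed
  have P2: "point_spectrum DB B \<subseteq> point_spectrum DA A" if "T ` DA = DB"
  proof
    fix \<mu> assume "\<mu> \<in> point_spectrum DB B"
    then obtain \<eta> where \<eta>: "\<eta> \<in> DB" "\<eta> \<noteq> 0" "B \<eta> = \<mu> *\<^sub>C \<eta>"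
      unfolding point_spectrum_def is_eigenvector_def by auto
    moreover note that
    ultimately obtain \<xi> where \<xi>: "\<xi> \<in> DA" "\<eta> = T \<xi>" by blast
    have "T (A \<xi> - \<mu> *\<^sub>C \<xi>) = 0" "A \<xi> - \<mu> *\<^sub>C \<xi> \<in> DT" using eig[OF \<xi>(1), of \<mu>] \<eta> \<xi> by auto
    hence "A \<xi> - \<mu> *\<^sub>C \<xi> = 0" using Tinj0 by blast
    hence "A \<xi> = \<mu> *\<^sub>C \<xi>" by simp
    moreover have "\<xi> \<noteq> 0" using \<xi> \<eta> T0 by auto
    ultimately show "\<mu> \<in> point_spectrum DA A"
      unfolding point_spectrum_def is_eigenvector_def using \<xi> by auto
  qed
  have P4: "point_spectrum DB B \<subseteq> spectrum_op DA A"
    if bi: "bounded_inverse DT T" and core: "is_core DB B (T ` DA)"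
  proof
    fix \<mu> assume "\<mu> \<in> point_spectrum DB B"
    then obtain \<eta> where \<eta>: "\<eta> \<in> DB" "\<eta> \<noteq> 0" "B \<eta> = \<mu> *\<^sub>C \<eta>"
      unfolding point_spectrum_def is_eigenvector_def by auto
    show "\<mu> \<in> spectrum_op DA A"
    proof (rule ccontr)
      assume "\<mu> \<notin> spectrum_op DA A"
      then obtain R where R: "bounded_clinear_map R" "\<And>x. x \<in> DA \<Longrightarrow> R (A x - \<mu> *\<^sub>C x) = x"
        unfolding spectrum_op_def resolvent_set_def by auto
      obtain K where K: "\<And>x. norm (R x) \<le> K * norm x" using R(1) unfolding bounded_clinear_map_def by auto
      obtain C where C: "\<And>x. x \<in> DT \<Longrightarrow> norm x \<le> C * norm (T x)" using bi unfolding bounded_inverse_def by auto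
      have "(\<eta>, B \<eta>) \<in> closure (graph_op (T ` DA) B)" using core \<eta> unfolding is_core_def graph_op_def by auto
      then obtain s where s: "\<And>n. s n \<in> graph_op (T ` DA) B" "s \<longlonglongrightarrow> (\<eta>, B \<eta>)"
        using closure_sequential by blast
      have "\<forall>n. \<exists>\<xi>. \<xi> \<in> DA \<and> s n = (T \<xi>, B (T \<xi>))" using s(1) unfolding graph_op_def by auto
      then obtain \<xi> where \<xi>: "\<And>n. \<xi> n \<in> DA" "\<And>n. s n = (T (\<xi> n), B (T (\<xi> n)))" by metis
      have c1: "(\<lambda>n. T (\<xi> n)) \<longlonglongrightarrow> \<eta>" using tendsto_fst[OF s(2)] \<xi>(2) by simp
      have c2: "(\<lambda>n. B (T (\<xi> n))) \<longlonglongrightarrow> \<mu> *\<^sub>C \<eta>" using tendsto_snd[OF s(2)] \<xi>(2) \<eta> by simp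
      have c3: "(\<lambda>n. \<mu> *\<^sub>C T (\<xi> n)) \<longlonglongrightarrow> \<mu> *\<^sub>C \<eta>"
      proof -
        have "(\<lambda>n. norm (T (\<xi> n) - \<eta>)) \<longlonglongrightarrow> 0" by (rule tendsto_norm_zero[OF LIM_zero[OF c1]])
        hence "(\<lambda>n. cmod \<mu> * norm (T (\<xi> n) - \<eta>)) \<longlonglongrightarrow> 0" by (rule tendsto_mult_right_zero)
        hence "(\<lambda>n. norm (\<mu> *\<^sub>C T (\<xi> n) - \<mu> *\<^sub>C \<eta>)) \<longlonglongrightarrow> 0"
          by (simp add: sC_diff[symmetric] norm_scaleC)
        thus ?thesis by (rule LIM_zero_cancel[OF tendsto_norm_zero_cancel])
      qed
      define y where "y n = A (\<xi> n) - \<mu> *\<^sub>C \<xi> n" for n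
      have yD: "y n \<in> DT" "T (y n) = B (T (\<xi> n)) - \<mu> *\<^sub>C T (\<xi> n)" for n
        using eig[OF \<xi>(1)] unfolding y_def by auto
      have "(\<lambda>n. T (y n)) \<longlonglongrightarrow> 0" unfolding yD using tendsto_diff[OF c2 c3] by simp
      hence l1: "(\<lambda>n. \<bar>C\<bar> * norm (T (y n))) \<longlonglongrightarrow> 0"
        by (rule tendsto_mult_right_zero[OF tendsto_norm_zero])
      have b1: "\<forall>n. norm (y n) \<le> \<bar>C\<bar> * norm (T (y n))"
        apply (rule allI) subgoal for n
      proof -
        have "C * norm (T (y n)) \<le> \<bar>C\<bar> * norm (T (y n))" by (intro mult_right_mono) auto
        thus ?thesis using C[OF yD(1), of n] by linarith
      qed done
      have "y \<longlonglongrightarrow> 0"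
        by (rule Lim_null_comparison[OF always_eventually[OF b1] l1])
      hence l2: "(\<lambda>n. \<bar>K\<bar> * norm (y n)) \<longlonglongrightarrow> 0" by (rule tendsto_mult_right_zero[OF tendsto_norm_zero])
      have b2: "\<forall>n. norm (\<xi> n) \<le> \<bar>K\<bar> * norm (y n)"
        apply (rule allI) subgoal for n
      proof -
        have e: "R (y n) = \<xi> n" unfolding y_def by (rule R(2)[OF \<xi>(1)])
        have "K * norm (y n) \<le> \<bar>K\<bar> * norm (y n)" by (intro mult_right_mono) auto
        thus ?thesis using K[of "y n"] unfolding e by linarith
      qed done
      have x0: "\<xi> \<longlonglongrightarrow> 0"
        by (rule Lim_null_comparison[OF always_eventually[OF b2] l2])
      have "(\<lambda>n. (\<xi> n, T (\<xi> n))) \<longlonglongrightarrow> (0, \<eta>)" using tendsto_Pair[OF x0 c1] .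
      moreover have "\<forall>n. (\<xi> n, T (\<xi> n)) \<in> graph_op DT T" using \<xi>(1) DAT unfolding graph_op_def by auto
      ultimately have "(0, \<eta>) \<in> graph_op DT T"
        using closed_sequentially[OF clT, of "\<lambda>n. (\<xi> n, T (\<xi> n))"] by blast
      hence "\<eta> = T 0" unfolding graph_op_def by auto
      thus False using T0 \<eta> by simp
    qed
  qed
  show ?thesis using P1 P2 P3 P4 ev by (simp add: subset_antisym)
qed

end
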